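(* Over strict timed traces, every metric formula is MHT-equivalent to a metric formula in unary normal form.
   Context: Metric formulas over $\mathcal{A}$: $\varphi ::= p \mid \bot \mid \varphi_1\otimes\varphi_2 \mid \bullet_I\varphi \mid \varphi_1\,\mathsf{S}_I\,\varphi_2 \mid \varphi_1\,\mathsf{T}_I\,\varphi_2 \mid \bigcirc_I\varphi \mid \varphi_1\,\mathsf{U}_I\,\varphi_2 \mid \varphi_1\,\mathsf{R}_I\,\varphi_2$, $\otimes\in\{\to,\wedge,\vee\}$, $I=[m,n)$, $m\in\mathbb{N}$, $n\in\mathbb{N}\cup\{\omega\}$; omitted subscript means $[0,\omega)$. Derived unary operators: $\blacksquare_I\varphi=\bot\,\mathsf{T}_I\,\varphi$, eventually before $\top\,\mathsf{S}_I\,\varphi$, $\widehat{\bullet}_I\varphi=\bullet_I\varphi\vee\neg\bullet_I\top$, $\Box_I\varphi=\bot\,\mathsf{R}_I\,\varphi$, $\Diamond_I\varphi=\top\,\mathsf{U}_I\,\varphi$, $\widehat{\bigcirc}_I\varphi=\bigcirc_I\varphi\vee\neg\bigcirc_I\top$ (with $\neg\varphi=\varphi\to\bot$, $\top=\neg\bot$). A metric formula is in unary normal form if intervals only affect unary temporal operators ($\bigcirc_I,\widehat{\bigcirc}_I,\Diamond_I,\Box_I,\bullet_I,\widehat{\bullet}_I,\blacksquare_I$, eventually before), while the binary operators $\mathsf{U},\mathsf{R},\mathsf{S},\mathsf{T}$ occur only with interval $[0,\omega)$ (no attached interval). Timed HT-trace $\mathbf{M}=(\langle\mathbf{H},\mathbf{T}\rangle,\tau)$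 of length $\lambda$: $H_i\subseteq T_i\subseteq\mathcal{A}$, $\tau:[0,\lambda)\to\mathbb{N}$, $\tau(0)=0$; strict means $\tau(i)<\tau(i+1)$ whenever $i+1<\lambda$. Satisfaction at $k$: $\bot$ never; $p$ iff $p\in H_k$; $\wedge,\vee$ usual; $\varphi\to\psi$ iff for both $\mathbf{M}'=\mathbf{M}$ and $\mathbf{M}'=(\langle\mathbf{T},\mathbf{T}\rangle,\tau)$, $\mathbf{M}',k\not\models\varphi$ or $\mathbf{M}',k\models\psi$; $\bullet_I\varphi$: $k>0$, $\varphi$ at $k-1$, $\tau(k)-\tau(k-1)\in I$; $\varphi\,\mathsf{S}_I\,\psi$: some $j\in[0,k]$ with $\tau(k)-\tau(j)\in I$, $\psi$ at $j$, $\varphi$ at all $i\in(j,k]$; $\varphi\,\mathsf{T}_I\,\psi$: for all such $j$, $\psi$ at $j$ or $\varphi$ at some $i\in(j,k]$; $\bigcirc_I\varphi$: $k+1<\lambda$, $\varphi$ at $k+1$, $\tau(k+1)-\tau(k)\in I$; $\varphi\,\mathsf{U}_I\,\psi$: some $j\in[k,\lambda)$ with $\tau(j)-\tau(k)\in I$, $\psi$ at $j$, $\varphi$ at all $i\in[k,j)$; $\varphi\,\mathsf{R}_I\,\psi$: for all such $j$, $\psi$ at $j$ or $\varphi$ at some $i\in[k,j)$. Equivalence means $\mathbf{M},k\models\varphi\leftrightarrow\psi$ for all strict timed HT-traces and all $k$. *)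

theory Defs
  imports Main "HOL-Library.Extended_Nat"
begin

text \<open>Intervals [m,n) with m natural and n natural or omega (= \<infinity>).\<close>
type_synonym interval = "nat \<times> enat"

definition in_interval :: "nat \<Rightarrow> interval \<Rightarrow> bool" where
  "in_interval d I \<longleftrightarrow> fst I \<le> d \<and> enat d < snd I"

definition full_interval :: interval where
  "full_interval = (0, \<infinity>)"

datatype 'a mform =
    Atom 'a
  | Bot
  | Impl "'a mform" "'a mform"
  | Conj "'a mform" "'a mform"
  | Disj "'a mform" "'a mform"
  | Prev interval "'a mform"
  | Since interval "'a mform" "'a mform"
  | Trigger interval "'a mform" "'a mform"
  | Next interval "'a mform"
  | Until interval "'a mform" "'a mform"
  | Release interval "'a mform" "'a mform"

definition Top :: "'a mform" where
  "Top = Impl Bot Bot"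

text \<open>Satisfaction in the timed HT-trace ((H,T),tau) of length lam at position k.
  The "here" component H is a parameter, so that implication can also
  evaluate in the total trace ((T,T),tau).\<close>
fun sat :: "(nat \<Rightarrow> 'a set) \<Rightarrow> (nat \<Rightarrow> 'a set) \<Rightarrow> (nat \<Rightarrow> nat) \<Rightarrow> enat \<Rightarrow> nat \<Rightarrow> 'a mform \<Rightarrow> bool" where
  "sat H T tau lam k (Atom p) = (p \<in> H k)"
| "sat H T tau lam k Bot = False"
| "sat H T tau lam k (Impl f g) =
     ((\<not> sat H T tau lam k f \<or> sat H T tau lam k g) \<and>
      (\<not> sat T T tau lam k f \<or> sat T T tau lam k g))"
| "sat H T tau lam k (Conj f g) = (sat H T tau lam k f \<and> sat H T tau lam k g)"
| "sat H T tau lam k (Disj f g) = (sat H T tau lam k f \<or> sat H T tau lam k g)"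
| "sat H T tau lam k (Prev I f) =
     (k > 0 \<and> sat H T tau lam (k - 1) f \<and> in_interval (tau k - tau (k - 1)) I)"
| "sat H T tau lam k (Since I f g) =
     (\<exists>j\<le>k. in_interval (tau k - tau j) I \<and> sat H T tau lam j g \<and>
        (\<forall>i. j < i \<and> i \<le> k \<longrightarrow> sat H T tau lam i f))"
| "sat H T tau lam k (Trigger I f g) =
     (\<forall>j\<le>k. in_interval (tau k - tau j) I \<longrightarrow> sat H T tau lam j g \<or>
        (\<exists>i. j < i \<and> i \<le> k \<and> sat H T tau lam i f))"
| "sat H T tau lam k (Next I f) =
     (enat (k + 1) < lam \<and> sat H T tau lam (k + 1) f \<and> in_interval (tau (k + 1) - tau k) I)"
| "sat H T tau lam k (Until I f g) =
     (\<exists>j. k \<le> j \<and> enat j < lam \<and> in_interval (tau j - tau k) I \<and> sat H T tau lam j g \<and>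
        (\<forall>i. k \<le> i \<and> i < j \<longrightarrow> sat H T tau lam i f))"
| "sat H T tau lam k (Release I f g) =
     (\<forall>j. k \<le> j \<and> enat j < lam \<and> in_interval (tau j - tau k) I \<longrightarrow> sat H T tau lam j g \<or>
        (\<exists>i. k \<le> i \<and> i < j \<and> sat H T tau lam i f))"

definition strict_timed_ht_trace :: "(nat \<Rightarrow> 'a set) \<Rightarrow> (nat \<Rightarrow> 'a set) \<Rightarrow> (nat \<Rightarrow> nat) \<Rightarrow> enat \<Rightarrow> bool" where
  "strict_timed_ht_trace H T tau lam \<longleftrightarrow>
     0 < lam \<and> (\<forall>i. enat i < lam \<longrightarrow> H i \<subseteq> T i) \<and> tau 0 = 0 \<and>
     (\<forall>i. enat (i + 1) < lam \<longrightarrow> tau i < tau (i + 1))"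

definition Iff :: "'a mform \<Rightarrow> 'a mform \<Rightarrow> 'a mform" where
  "Iff f g = Conj (Impl f g) (Impl g f)"

definition mht_equiv :: "'a mform \<Rightarrow> 'a mform \<Rightarrow> bool" where
  "mht_equiv f g \<longleftrightarrow>
     (\<forall>H T tau lam k. strict_timed_ht_trace H T tau lam \<and> enat k < lam \<longrightarrow>
        sat H T tau lam k (Iff f g))"

text \<open>Unary normal form: binary U,R,S,T carry an interval other than [0,\<omega>) only
  when they are the derived unary operators
  box = Bot R_I _, diamond = Top U_I _, historically = Bot T_I _, once = Top S_I _.
  (The hatted next/previous operators are built from primitive next/previous.)\<close>
fun unary_nf :: "'a mform \<Rightarrow> bool" where
  "unary_nf (Atom p) = True"
| "unary_nf Bot = True"
| "unary_nf (Impl f g) = (unary_nf f \<and> unary_nf g)"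
| "unary_nf (Conj f g) = (unary_nf f \<and> unary_nf g)"
| "unary_nf (Disj f g) = (unary_nf f \<and> unary_nf g)"
| "unary_nf (Prev I f) = unary_nf f"
| "unary_nf (Next I f) = unary_nf f"
| "unary_nf (Since I f g) = ((I = full_interval \<or> f = Top) \<and> unary_nf f \<and> unary_nf g)"
| "unary_nf (Trigger I f g) = ((I = full_interval \<or> f = Bot) \<and> unary_nf f \<and> unary_nf g)"
| "unary_nf (Until I f g) = ((I = full_interval \<or> f = Top) \<and> unary_nf f \<and> unary_nf g)"
| "unary_nf (Release I f g) = ((I = full_interval \<or> f = Bot) \<and> unary_nf f \<and> unary_nf g)"

end

theory Submission
  imports Defs
begin



fun Disjs :: "'a mform list \<Rightarrow> 'a mform" where
  "Disjs [] = Bot" | "Disjs (x # xs) = Disj x (Disjs xs)"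

fun Conjs :: "'a mform list \<Rightarrow> 'a mform" where
  "Conjs [] = Top" | "Conjs (x # xs) = Conj x (Conjs xs)"

definition Hat :: "interval \<Rightarrow> 'a mform \<Rightarrow> 'a mform" where
  "Hat I f = Disj (Next I f) (Impl (Next I Top) Bot)"

definition PHat :: "interval \<Rightarrow> 'a mform \<Rightarrow> 'a mform" where
  "PHat I f = Disj (Prev I f) (Impl (Prev I Top) Bot)"

lemma sat_Top[simp]: "sat H T tau lam k Top"
  by (simp add: Top_def)

lemma sat_Disjs: "sat H T tau lam k (Disjs xs) = (\<exists>x\<in>set xs. sat H T tau lam k x)"
  by (induction xs) auto

lemma sat_Conjs: "sat H T tau lam k (Conjs xs) = (\<forall>x\<in>set xs. sat H T tau lam k x)"
  by (induction xs) auto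

lemma sat_Hat: "sat H T tau lam k (Hat I f) =
  (enat (k+1) < lam \<and> in_interval (tau (k+1) - tau k) I \<longrightarrow> sat H T tau lam (k+1) f)"
  by (auto simp: Hat_def)

lemma sat_PHat: "sat H T tau lam k (PHat I f) =
  (0 < k \<and> in_interval (tau k - tau (k-1)) I \<longrightarrow> sat H T tau lam (k-1) f)"
  by (auto simp: PHat_def)

lemma unf_Top[simp]: "unary_nf Top" by (simp add: Top_def)

lemma unf_Disjs: "(\<forall>x\<in>set xs. unary_nf x) \<Longrightarrow> unary_nf (Disjs xs)"
  by (induction xs) auto

lemma unf_Conjs: "(\<forall>x\<in>set xs. unary_nf x) \<Longrightarrow> unary_nf (Conjs xs)"
  by (induction xs) auto

lemma unf_Hat: "unary_nf f \<Longrightarrow> unary_nf (Hat I f)" by (simp add: Hat_def)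
lemma unf_PHat: "unary_nf f \<Longrightarrow> unary_nf (PHat I f)" by (simp add: PHat_def)

definition bnd :: "nat \<Rightarrow> enat \<Rightarrow> nat" where
  "bnd m n = (case n of enat k \<Rightarrow> k | \<infinity> \<Rightarrow> m)"

lemma bnd_dec: "\<not> (n = \<infinity> \<and> m = 0) \<Longrightarrow> d \<in> set [1..<bnd m n] \<Longrightarrow> bnd (m - d) (n - enat d) < bnd m n"
  by (cases n) (auto simp: bnd_def)

function U :: "nat \<Rightarrow> enat \<Rightarrow> 'a mform \<Rightarrow> 'a mform \<Rightarrow> 'a mform" where
  "U m n a b = (if n = \<infinity> \<and> m = 0 then Until full_interval a b else
     Disj (if in_interval 0 (m, n) then b else Bot)
       (Conj a (Disjs (map (\<lambda>d. Next (d, enat (Suc d)) (U (m - d) (n - enat d) a b)) [1..<bnd m n]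
          @ (if n = \<infinity> then [Next (m, \<infinity>) (Until full_interval a b)] else [])))))"
  by pat_completeness auto
termination
  by (relation "measure (\<lambda>(m, n, a, b). bnd m n)") (auto intro: bnd_dec)

function R :: "nat \<Rightarrow> enat \<Rightarrow> 'a mform \<Rightarrow> 'a mform \<Rightarrow> 'a mform" where
  "R m n a b = (if n = \<infinity> \<and> m = 0 then Release full_interval a b else
     Conj (if in_interval 0 (m, n) then b else Top)
       (Disj a (Conjs (map (\<lambda>d. Hat (d, enat (Suc d)) (R (m - d) (n - enat d) a b)) [1..<bnd m n]
          @ (if n = \<infinity> then [Hat (m, \<infinity>) (Release full_interval a b)] else [])))))"
  by pat_completeness auto
termination
  by (relation "measure (\<lambda>(m, n, a, b). bnd m n)") (auto intro: bnd_dec)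

function S :: "nat \<Rightarrow> enat \<Rightarrow> 'a mform \<Rightarrow> 'a mform \<Rightarrow> 'a mform" where
  "S m n a b = (if n = \<infinity> \<and> m = 0 then Since full_interval a b else
     Disj (if in_interval 0 (m, n) then b else Bot)
       (Conj a (Disjs (map (\<lambda>d. Prev (d, enat (Suc d)) (S (m - d) (n - enat d) a b)) [1..<bnd m n]
          @ (if n = \<infinity> then [Prev (m, \<infinity>) (Since full_interval a b)] else [])))))"
  by pat_completeness auto
termination
  by (relation "measure (\<lambda>(m, n, a, b). bnd m n)") (auto intro: bnd_dec)

function Tr :: "nat \<Rightarrow> enat \<Rightarrow> 'a mform \<Rightarrow> 'a mform \<Rightarrow> 'a mform" where
  "Tr m n a b = (if n = \<infinity> \<and> m = 0 then Trigger full_interval a b else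
     Conj (if in_interval 0 (m, n) then b else Top)
       (Disj a (Conjs (map (\<lambda>d. PHat (d, enat (Suc d)) (Tr (m - d) (n - enat d) a b)) [1..<bnd m n]
          @ (if n = \<infinity> then [PHat (m, \<infinity>) (Trigger full_interval a b)] else [])))))"
  by pat_completeness auto
termination
  by (relation "measure (\<lambda>(m, n, a, b). bnd m n)") (auto intro: bnd_dec)

declare U.simps[simp del] R.simps[simp del] S.simps[simp del] Tr.simps[simp del]

lemma unf_U: "unary_nf a \<Longrightarrow> unary_nf b \<Longrightarrow> unary_nf (U m n a b)"
proof (induction m n a b rule: U.induct)
  case (1 m n a b) then show ?case
    by (subst U.simps) (auto simp: full_interval_def intro!: unf_Disjs)
qed

lemma unf_R: "unary_nf a \<Longrightarrow> unary_nf b \<Longrightarrow> unary_nf (R m n a b)"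
proof (induction m n a b rule: R.induct)
  case (1 m n a b) then show ?case
    by (subst R.simps) (auto simp: full_interval_def intro!: unf_Conjs unf_Hat)
qed

lemma unf_S: "unary_nf a \<Longrightarrow> unary_nf b \<Longrightarrow> unary_nf (S m n a b)"
proof (induction m n a b rule: S.induct)
  case (1 m n a b) then show ?case
    by (subst S.simps) (auto simp: full_interval_def intro!: unf_Disjs)
qed

lemma unf_Tr: "unary_nf a \<Longrightarrow> unary_nf b \<Longrightarrow> unary_nf (Tr m n a b)"
proof (induction m n a b rule: Tr.induct)
  case (1 m n a b) then show ?case
    by (subst Tr.simps) (auto simp: full_interval_def intro!: unf_Conjs unf_PHat)
qed




definition strict_tau :: "(nat \<Rightarrow> nat) \<Rightarrow> enat \<Rightarrow> bool" where
  "strict_tau tau lam = (\<forall>i. enat (Suc i) < lam \<longrightarrow> tau i < tau (Suc i))"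

lemma enat_lt: "i \<le> j \<Longrightarrow> enat j < lam \<Longrightarrow> enat i < lam"
  using enat_ord_simps(1) le_less_trans by blast

lemma tau_mono:
  assumes st: "strict_tau tau lam" shows "enat j < lam \<Longrightarrow> i \<le> j \<Longrightarrow> tau i + (j - i) \<le> tau j"
proof (induction j)
  case 0 then show ?case by simp
next
  case (Suc j)
  show ?case
  proof (cases "i = Suc j")
    case True then show ?thesis by simp
  next
    case False
    then have "i \<le> j" using Suc by simp
    moreover have "enat j < lam" using Suc.prems(1) enat_lt[of j "Suc j" lam] by simp
    ultimately have "tau i + (j - i) \<le> tau j" using Suc.IH by simp
    moreover have "tau j < tau (Suc j)" using st Suc.prems(1) by (simp add: strict_tau_def)
    ultimately show ?thesis using \<open>i \<le> j\<close> by (simp add: Suc_diff_le)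
  qed
qed

lemma shift: "in_interval (d + x) (m, n) = in_interval x (m - d, n - enat d)"
  by (cases n) (auto simp: in_interval_def)

lemma in_unit: "in_interval x (d, enat (Suc d)) = (x = d)"
  by (auto simp: in_interval_def)

definition untilP :: "(nat \<Rightarrow> nat) \<Rightarrow> enat \<Rightarrow> nat \<Rightarrow> enat \<Rightarrow> (nat \<Rightarrow> bool) \<Rightarrow> (nat \<Rightarrow> bool) \<Rightarrow> nat \<Rightarrow> bool" where
  "untilP tau lam m n A B k = (\<exists>j. k \<le> j \<and> enat j < lam \<and> in_interval (tau j - tau k) (m, n) \<and> B j \<and>
        (\<forall>i. k \<le> i \<and> i < j \<longrightarrow> A i))"

definition sinceP :: "(nat \<Rightarrow> nat) \<Rightarrow> nat \<Rightarrow> enat \<Rightarrow> (nat \<Rightarrow> bool) \<Rightarrow> (nat \<Rightarrow> bool) \<Rightarrow> nat \<Rightarrow> bool" where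
  "sinceP tau m n A B k = (\<exists>j\<le>k. in_interval (tau k - tau j) (m, n) \<and> B j \<and>
        (\<forall>i. j < i \<and> i \<le> k \<longrightarrow> A i))"

lemma until_unfold:
  assumes st: "strict_tau tau lam" and k: "enat k < lam" and nz: "\<not> (n = \<infinity> \<and> m = 0)"
  shows "untilP tau lam m n A B k = (in_interval 0 (m,n) \<and> B k \<or> A k \<and>
       ((\<exists>d\<in>set [1..<bnd m n]. enat (k+1) < lam \<and> tau (k+1) - tau k = d \<and> untilP tau lam (m-d) (n - enat d) A B (k+1))
        \<or> (n = \<infinity> \<and> enat (k+1) < lam \<and> in_interval (tau (k+1) - tau k) (m,\<infinity>) \<and> untilP tau lam 0 \<infinity> A B (k+1))))"
    (is "?L = ?R")
proof
  have step: "tau j - tau k = (tau (k+1) - tau k) + (tau j - tau (k+1))" "tau (k+1) - tau k \<ge> 1"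
    if "k + 1 \<le> j" "enat j < lam" for j
  proof -
    have "tau (k+1) \<le> tau j" using tau_mono[OF st, of j "k+1"] that by simp
    moreover have "enat (Suc k) < lam" using that enat_lt[of "Suc k" j lam] by simp
    then have "tau k < tau (k+1)" using st by (simp add: strict_tau_def)
    ultimately show "tau j - tau k = (tau (k+1) - tau k) + (tau j - tau (k+1))" "tau (k+1) - tau k \<ge> 1" by auto
  qed
  show "?R \<Longrightarrow> ?L"
  proof -
    assume L: ?R
    show ?L
    proof (cases "in_interval 0 (m,n) \<and> B k")
      case True then show ?thesis using k unfolding untilP_def by (intro exI[of _ k]) auto
    next
      case nb: False
      with L have ak: "A k" by auto
      from nb L consider
        (A) d where "d \<in> set [1..<bnd m n]" "enat (k+1) < lam" "untilP tau lam (m-d) (n - enat d) A B (k+1)" "tau (k+1) - tau k = d"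
        | (B) "n = \<infinity>" "enat (k+1) < lam" "in_interval (tau (k+1) - tau k) (m,\<infinity>)" "untilP tau lam 0 \<infinity> A B (k+1)"
        by blast
      then show ?thesis
      proof cases
        case A
        from A(3) obtain j where j: "k+1 \<le> j" "enat j < lam"
          "in_interval (tau j - tau (k+1)) (m - d, n - enat d)" "B j" "\<forall>i. k+1 \<le> i \<and> i < j \<longrightarrow> A i"
          unfolding untilP_def by blast
        have "in_interval (tau j - tau k) (m, n)" using step[OF j(1,2)] A(4) j(3) shift by metis
        moreover have "\<forall>i. k \<le> i \<and> i < j \<longrightarrow> A i" using j(5) ak
          by (metis Suc_eq_plus1 le_antisym not_less_eq_eq)
        moreover have "k \<le> j" using j(1) by simp
        ultimately show ?thesis using j unfolding untilP_def by blast
      next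
        case B
        from B(4) obtain j where j: "k+1 \<le> j" "enat j < lam" "B j" "\<forall>i. k+1 \<le> i \<and> i < j \<longrightarrow> A i"
          unfolding untilP_def by blast
        have le: "tau (k+1) - tau k \<le> tau j - tau k" using step(1)[OF j(1,2)] le_add1 by metis
        have "in_interval (tau j - tau k) (m, n)" using le B(1,3) unfolding in_interval_def by simp
        moreover have "\<forall>i. k \<le> i \<and> i < j \<longrightarrow> A i" using j(4) ak
          by (metis Suc_eq_plus1 le_antisym not_less_eq_eq)
        moreover have "k \<le> j" using j(1) by simp
        ultimately show ?thesis using j unfolding untilP_def by blast
      qed
    qed
  qed
  show "?L \<Longrightarrow> ?R"
  proof -
    assume R: ?L
    then obtain j where j: "k \<le> j" "enat j < lam" "in_interval (tau j - tau k) (m,n)" "B j" "\<forall>i. k \<le> i \<and> i < j \<longrightarrow> A i"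
      unfolding untilP_def by blast
    show ?R
    proof (cases "j = k")
      case True then show ?thesis using j by auto
    next
      case False
      then have j1: "k + 1 \<le> j" using j(1) by simp
      have ak: "A k" using j(5) j1 by simp
      have k1: "enat (k+1) < lam" using enat_lt[OF j1 j(2)] .
      define d where "d = tau (k+1) - tau k"
      define e where "e = tau j - tau (k+1)"
      define D where "D = tau j - tau k"
      have tj: "D = d + e" unfolding D_def d_def e_def by (rule step(1)[OF j1 j(2)])
      have d1: "d \<ge> 1" unfolding d_def by (rule step(2)[OF j1 j(2)])
      have j5: "\<forall>i. k+1 \<le> i \<and> i < j \<longrightarrow> A i" using j(5) by simp
      have Uk1: "untilP tau lam 0 \<infinity> A B (k+1)"
        unfolding untilP_def
        apply (rule exI[of _ j])
        using j(2,4) j1 j5 by (simp add: in_interval_def)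
      have DI: "in_interval D (m, n)" using j(3) unfolding D_def .
      show ?thesis
      proof (cases "n = \<infinity> \<and> m \<le> d")
        case True
        have "in_interval (tau (k+1) - tau k) (m, \<infinity>)" using True unfolding d_def in_interval_def by simp
        then show ?thesis using ak k1 Uk1 True by blast
      next
        case nd: False
        have dm: "d \<in> set [1..<bnd m n]"
        proof (cases n)
          case (enat n')
          then have "D < n'" using DI by (simp add: in_interval_def)
          then show ?thesis using enat tj d1 by (simp add: bnd_def)
        next
          case infinity then show ?thesis using nd d1 by (simp add: bnd_def)
        qed
        have eI: "in_interval e (m - d, n - enat d)" using shift[of d e m n] DI tj by simp
        have "untilP tau lam (m - d) (n - enat d) A B (k+1)"
          unfolding untilP_def
          apply (rule exI[of _ j])
          using j(2,4) j1 j5 eI unfolding e_def by simp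
        then show ?thesis using ak k1 dm d_def by blast
      qed
    qed
  qed
qed




lemma since_unfold:
  assumes st: "strict_tau tau lam" and k: "enat k < lam" and nz: "\<not> (n = \<infinity> \<and> m = 0)"
  shows "sinceP tau m n A B k = (in_interval 0 (m,n) \<and> B k \<or> A k \<and>
       ((\<exists>d\<in>set [1..<bnd m n]. 0 < k \<and> tau k - tau (k-1) = d \<and> sinceP tau (m-d) (n - enat d) A B (k-1))
        \<or> (n = \<infinity> \<and> 0 < k \<and> in_interval (tau k - tau (k-1)) (m,\<infinity>) \<and> sinceP tau 0 \<infinity> A B (k-1))))"
    (is "?L = ?R")
proof
  have step: "tau k - tau j = (tau k - tau (k-1)) + (tau (k-1) - tau j)" "tau k - tau (k-1) \<ge> 1"
    if "j \<le> k - 1" "0 < k" for j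
  proof -
    have k1: "enat (k-1) < lam" using enat_lt[of "k-1" k lam] k by simp
    have "tau j \<le> tau (k-1)" using tau_mono[OF st k1 that(1)] by simp
    moreover have "enat (Suc (k-1)) < lam" using k that(2) by simp
    then have "tau (k-1) < tau k" using st that(2) unfolding strict_tau_def by (metis Suc_pred')
    ultimately show "tau k - tau j = (tau k - tau (k-1)) + (tau (k-1) - tau j)" "tau k - tau (k-1) \<ge> 1" by auto
  qed
  show "?R \<Longrightarrow> ?L"
  proof -
    assume L: ?R
    show ?L
    proof (cases "in_interval 0 (m,n) \<and> B k")
      case True then show ?thesis unfolding sinceP_def by (intro exI[of _ k]) auto
    next
      case nb: False
      with L have ak: "A k" by auto
      from nb L consider
        (A) d where "d \<in> set [1..<bnd m n]" "0 < k" "sinceP tau (m-d) (n - enat d) A B (k-1)" "tau k - tau (k-1) = d"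
        | (B) "n = \<infinity>" "0 < k" "in_interval (tau k - tau (k-1)) (m,\<infinity>)" "sinceP tau 0 \<infinity> A B (k-1)"
        by blast
      then show ?thesis
      proof cases
        case A
        from A(3) obtain j where j: "j \<le> k - 1"
          "in_interval (tau (k-1) - tau j) (m - d, n - enat d)" "B j" "\<forall>i. j < i \<and> i \<le> k-1 \<longrightarrow> A i"
          unfolding sinceP_def by blast
        have "in_interval (tau k - tau j) (m, n)" using step[OF j(1) A(2)] A(4) j(2) shift by metis
        moreover have "\<forall>i. j < i \<and> i \<le> k \<longrightarrow> A i"
        proof (intro allI impI)
          fix i assume "j < i \<and> i \<le> k" then show "A i" using j(4) ak by (cases "i = k") auto
        qed
        moreover have "j \<le> k" using j(1) by simp
        ultimately show ?thesis using j unfolding sinceP_def by blast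
      next
        case B
        from B(4) obtain j where j: "j \<le> k - 1" "B j" "\<forall>i. j < i \<and> i \<le> k-1 \<longrightarrow> A i"
          unfolding sinceP_def by blast
        have le: "tau k - tau (k-1) \<le> tau k - tau j" using step(1)[OF j(1) B(2)] le_add1 by metis
        have "in_interval (tau k - tau j) (m, n)" using le B(1,3) unfolding in_interval_def by simp
        moreover have "\<forall>i. j < i \<and> i \<le> k \<longrightarrow> A i"
        proof (intro allI impI)
          fix i assume "j < i \<and> i \<le> k" then show "A i" using j(3) ak by (cases "i = k") auto
        qed
        moreover have "j \<le> k" using j(1) by simp
        ultimately show ?thesis using j unfolding sinceP_def by blast
      qed
    qed
  qed
  show "?L \<Longrightarrow> ?R"
  proof -
    assume R: ?L
    then obtain j where j: "j \<le> k" "in_interval (tau k - tau j) (m,n)" "B j" "\<forall>i. j < i \<and> i \<le> k \<longrightarrow> A i"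
      unfolding sinceP_def by blast
    show ?R
    proof (cases "j = k")
      case True then show ?thesis using j by auto
    next
      case False
      then have j1: "j \<le> k - 1" and k0: "0 < k" using j(1) by auto
      have ak: "A k" using j(4) j(1) False by simp
      define d where "d = tau k - tau (k-1)"
      define e where "e = tau (k-1) - tau j"
      define D where "D = tau k - tau j"
      have tj: "D = d + e" unfolding D_def d_def e_def by (rule step(1)[OF j1 k0])
      have d1: "d \<ge> 1" unfolding d_def by (rule step(2)[OF j1 k0])
      have j5: "\<forall>i. j < i \<and> i \<le> k-1 \<longrightarrow> A i" using j(4) by auto
      have Uk1: "sinceP tau 0 \<infinity> A B (k-1)"
        unfolding sinceP_def
        apply (rule exI[of _ j])
        using j(3) j1 j5 by (simp add: in_interval_def)
      have DI: "in_interval D (m, n)" using j(2) unfolding D_def .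
      show ?thesis
      proof (cases "n = \<infinity> \<and> m \<le> d")
        case True
        have "in_interval (tau k - tau (k-1)) (m, \<infinity>)" using True unfolding d_def in_interval_def by simp
        then show ?thesis using ak k0 Uk1 True by blast
      next
        case nd: False
        have dm: "d \<in> set [1..<bnd m n]"
        proof (cases n)
          case (enat n')
          then have "D < n'" using DI by (simp add: in_interval_def)
          then show ?thesis using enat tj d1 by (simp add: bnd_def)
        next
          case infinity then show ?thesis using nd d1 by (simp add: bnd_def)
        qed
        have eI: "in_interval e (m - d, n - enat d)" using shift[of d e m n] DI tj by simp
        have "sinceP tau (m - d) (n - enat d) A B (k-1)"
          unfolding sinceP_def
          apply (rule exI[of _ j])
          using j(3) j1 j5 eI unfolding e_def by simp
        then show ?thesis using ak k0 dm d_def by blast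
      qed
    qed
  qed
qed




lemma sat_Until: "sat H T tau lam k (Until (m,n) a b) =
   untilP tau lam m n (\<lambda>i. sat H T tau lam i a) (\<lambda>i. sat H T tau lam i b) k"
  by (simp add: untilP_def)

lemma sat_Release: "sat H T tau lam k (Release (m,n) a b) =
   (\<not> untilP tau lam m n (\<lambda>i. \<not> sat H T tau lam i a) (\<lambda>i. \<not> sat H T tau lam i b) k)"
  by (auto simp: untilP_def)

lemma sat_Since: "sat H T tau lam k (Since (m,n) a b) =
   sinceP tau m n (\<lambda>i. sat H T tau lam i a) (\<lambda>i. sat H T tau lam i b) k"
  by (simp add: sinceP_def)

lemma sat_Trigger: "sat H T tau lam k (Trigger (m,n) a b) =
   (\<not> sinceP tau m n (\<lambda>i. \<not> sat H T tau lam i a) (\<lambda>i. \<not> sat H T tau lam i b) k)"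
  by (auto simp: sinceP_def)

lemma ball_if1: "(\<forall>y\<in>set (if P then [x] else []). Q y) = (P \<longrightarrow> Q x)" by (cases P) auto
lemma bex_if1: "(\<exists>y\<in>set (if P then [x] else []). Q y) = (P \<and> Q x)" by (cases P) auto
lemma ball_map: "(\<forall>y\<in>set (map f xs). Q y) = (\<forall>x\<in>set xs. Q (f x))" by simp
lemma bex_map: "(\<exists>y\<in>set (map f xs). Q y) = (\<exists>x\<in>set xs. Q (f x))" by simp

lemma U_sem:
  assumes st: "strict_tau tau lam"
  shows "enat k < lam \<Longrightarrow> sat H T tau lam k (U m n a b) =
     untilP tau lam m n (\<lambda>i. sat H T tau lam i a) (\<lambda>i. sat H T tau lam i b) k"
proof (induction m n a b arbitrary: k rule: U.induct)
  case (1 m n a b k)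
  let ?S = "sat H T tau lam"
  let ?A = "\<lambda>i. ?S i a"
  let ?B = "\<lambda>i. ?S i b"
  show ?case
  proof (cases "n = \<infinity> \<and> m = 0")
    case True thus ?thesis by (subst U.simps) (simp add: full_interval_def untilP_def)
  next
    case nz: False
    have "?S k (U m n a b) = (in_interval 0 (m,n) \<and> ?S k b \<or> ?S k a \<and>
       ((\<exists>d\<in>set [1..<bnd m n]. enat (k+1) < lam \<and> tau (k+1) - tau k = d \<and> ?S (k+1) (U (m-d) (n - enat d) a b))
        \<or> (n = \<infinity> \<and> enat (k+1) < lam \<and> in_interval (tau (k+1) - tau k) (m,\<infinity>) \<and> ?S (k+1) (Until full_interval a b))))"
    proof -
      have e: "U m n a b = Disj (if in_interval 0 (m, n) then b else Bot)
       (Conj a (Disjs (map (\<lambda>d. Next (d, enat (Suc d)) (U (m - d) (n - enat d) a b)) [1..<bnd m n]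
          @ (if n = \<infinity> then [Next (m, \<infinity>) (Until full_interval a b)] else []))))"
        using nz by (subst U.simps) simp
      show ?thesis unfolding e
        by (simp only: sat.simps sat_Disjs set_append bex_map bex_if1 in_unit bex_Un) auto
    qed
    also have "\<dots> = (in_interval 0 (m,n) \<and> ?B k \<or> ?A k \<and>
       ((\<exists>d\<in>set [1..<bnd m n]. enat (k+1) < lam \<and> tau (k+1) - tau k = d \<and> untilP tau lam (m-d) (n - enat d) ?A ?B (k+1))
        \<or> (n = \<infinity> \<and> enat (k+1) < lam \<and> in_interval (tau (k+1) - tau k) (m,\<infinity>) \<and> untilP tau lam 0 \<infinity> ?A ?B (k+1))))"
    proof -
      have X: "(\<exists>d\<in>set [1..<bnd m n]. enat (k+1) < lam \<and> tau (k+1) - tau k = d \<and> ?S (k+1) (U (m-d) (n - enat d) a b))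
          = (\<exists>d\<in>set [1..<bnd m n]. enat (k+1) < lam \<and> tau (k+1) - tau k = d \<and> untilP tau lam (m-d) (n - enat d) ?A ?B (k+1))"
      proof (rule bex_cong[OF refl])
        fix d assume "d \<in> set [1..<bnd m n]"
        then show "(enat (k+1) < lam \<and> tau (k+1) - tau k = d \<and> ?S (k+1) (U (m-d) (n - enat d) a b))
          = (enat (k+1) < lam \<and> tau (k+1) - tau k = d \<and> untilP tau lam (m-d) (n - enat d) ?A ?B (k+1))"
          using "1.IH"[OF nz, of d "k+1"] by blast
      qed
      have Y: "?S (k+1) (Until full_interval a b) = untilP tau lam 0 \<infinity> ?A ?B (k+1)"
        by (simp add: full_interval_def untilP_def)
      show ?thesis by (simp only: X Y)
    qed
    also have "\<dots> = untilP tau lam m n ?A ?B k"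
      by (rule until_unfold[OF st "1.prems" nz, symmetric])
    finally show ?thesis .
  qed
qed

lemma R_sem:
  assumes st: "strict_tau tau lam"
  shows "enat k < lam \<Longrightarrow> sat H T tau lam k (R m n a b) =
     (\<not> untilP tau lam m n (\<lambda>i. \<not> sat H T tau lam i a) (\<lambda>i. \<not> sat H T tau lam i b) k)"
proof (induction m n a b arbitrary: k rule: R.induct)
  case (1 m n a b k)
  let ?S = "sat H T tau lam"
  let ?A = "\<lambda>i. \<not> ?S i a"
  let ?B = "\<lambda>i. \<not> ?S i b"
  show ?case
  proof (cases "n = \<infinity> \<and> m = 0")
    case True thus ?thesis by (subst R.simps) (auto simp: full_interval_def untilP_def)
  next
    case nz: False
    have "?S k (R m n a b) = ((in_interval 0 (m,n) \<longrightarrow> ?S k b) \<and> (?S k a \<or>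
       ((\<forall>d\<in>set [1..<bnd m n]. enat (k+1) < lam \<and> tau (k+1) - tau k = d \<longrightarrow> ?S (k+1) (R (m-d) (n - enat d) a b))
        \<and> (n = \<infinity> \<and> enat (k+1) < lam \<and> in_interval (tau (k+1) - tau k) (m,\<infinity>) \<longrightarrow> ?S (k+1) (Release full_interval a b)))))"
    proof -
      have e: "R m n a b = Conj (if in_interval 0 (m, n) then b else Top)
       (Disj a (Conjs (map (\<lambda>d. Hat (d, enat (Suc d)) (R (m - d) (n - enat d) a b)) [1..<bnd m n]
          @ (if n = \<infinity> then [Hat (m, \<infinity>) (Release full_interval a b)] else []))))"
        using nz by (subst R.simps) simp
      show ?thesis unfolding e
        by (simp only: sat.simps sat_Conjs set_append ball_map ball_if1 ball_Un sat_Hat in_unit) auto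
    qed
    also have "\<dots> = ((in_interval 0 (m,n) \<longrightarrow> \<not> ?B k) \<and> (\<not> ?A k \<or>
       ((\<forall>d\<in>set [1..<bnd m n]. enat (k+1) < lam \<and> tau (k+1) - tau k = d \<longrightarrow> \<not> untilP tau lam (m-d) (n - enat d) ?A ?B (k+1))
        \<and> (n = \<infinity> \<and> enat (k+1) < lam \<and> in_interval (tau (k+1) - tau k) (m,\<infinity>) \<longrightarrow> \<not> untilP tau lam 0 \<infinity> ?A ?B (k+1)))))"
    proof -
      have X: "(\<forall>d\<in>set [1..<bnd m n]. enat (k+1) < lam \<and> tau (k+1) - tau k = d \<longrightarrow> ?S (k+1) (R (m-d) (n - enat d) a b))
          = (\<forall>d\<in>set [1..<bnd m n]. enat (k+1) < lam \<and> tau (k+1) - tau k = d \<longrightarrow> \<not> untilP tau lam (m-d) (n - enat d) ?A ?B (k+1))"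
      proof (rule ball_cong[OF refl])
        fix d assume "d \<in> set [1..<bnd m n]"
        then show "(enat (k+1) < lam \<and> tau (k+1) - tau k = d \<longrightarrow> ?S (k+1) (R (m-d) (n - enat d) a b))
          = (enat (k+1) < lam \<and> tau (k+1) - tau k = d \<longrightarrow> \<not> untilP tau lam (m-d) (n - enat d) ?A ?B (k+1))"
          using "1.IH"[OF nz, of d "k+1"] by blast
      qed
      have Y: "?S (k+1) (Release full_interval a b) = (\<not> untilP tau lam 0 \<infinity> ?A ?B (k+1))"
        by (auto simp: full_interval_def untilP_def)
      show ?thesis by (simp only: X Y not_not)
    qed
    also have "\<dots> = (\<not> untilP tau lam m n ?A ?B k)"
      unfolding until_unfold[OF st "1.prems" nz] by blast
    finally show ?thesis .
  qed
qed

lemma S_sem: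
  assumes st: "strict_tau tau lam"
  shows "enat k < lam \<Longrightarrow> sat H T tau lam k (S m n a b) =
     sinceP tau m n (\<lambda>i. sat H T tau lam i a) (\<lambda>i. sat H T tau lam i b) k"
proof (induction m n a b arbitrary: k rule: S.induct)
  case (1 m n a b k)
  let ?S = "sat H T tau lam"
  let ?A = "\<lambda>i. ?S i a"
  let ?B = "\<lambda>i. ?S i b"
  show ?case
  proof (cases "n = \<infinity> \<and> m = 0")
    case True thus ?thesis by (subst S.simps) (simp add: full_interval_def sinceP_def)
  next
    case nz: False
    have "?S k (S m n a b) = (in_interval 0 (m,n) \<and> ?S k b \<or> ?S k a \<and>
       ((\<exists>d\<in>set [1..<bnd m n]. 0 < k \<and> tau k - tau (k-1) = d \<and> ?S (k-1) (S (m-d) (n - enat d) a b))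
        \<or> (n = \<infinity> \<and> 0 < k \<and> in_interval (tau k - tau (k-1)) (m,\<infinity>) \<and> ?S (k-1) (Since full_interval a b))))"
    proof -
      have e: "S m n a b = Disj (if in_interval 0 (m, n) then b else Bot)
       (Conj a (Disjs (map (\<lambda>d. Prev (d, enat (Suc d)) (S (m - d) (n - enat d) a b)) [1..<bnd m n]
          @ (if n = \<infinity> then [Prev (m, \<infinity>) (Since full_interval a b)] else []))))"
        using nz by (subst S.simps) simp
      show ?thesis unfolding e
        by (simp only: sat.simps sat_Disjs set_append bex_map bex_if1 in_unit bex_Un) auto
    qed
    also have "\<dots> = (in_interval 0 (m,n) \<and> ?B k \<or> ?A k \<and>
       ((\<exists>d\<in>set [1..<bnd m n]. 0 < k \<and> tau k - tau (k-1) = d \<and> sinceP tau (m-d) (n - enat d) ?A ?B (k-1))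
        \<or> (n = \<infinity> \<and> 0 < k \<and> in_interval (tau k - tau (k-1)) (m,\<infinity>) \<and> sinceP tau 0 \<infinity> ?A ?B (k-1))))"
    proof -
      have k1: "enat (k-1) < lam" using enat_lt[of "k-1" k lam] "1.prems" by simp
      have X: "(\<exists>d\<in>set [1..<bnd m n]. 0 < k \<and> tau k - tau (k-1) = d \<and> ?S (k-1) (S (m-d) (n - enat d) a b))
          = (\<exists>d\<in>set [1..<bnd m n]. 0 < k \<and> tau k - tau (k-1) = d \<and> sinceP tau (m-d) (n - enat d) ?A ?B (k-1))"
      proof (rule bex_cong[OF refl])
        fix d assume "d \<in> set [1..<bnd m n]"
        then show "(0 < k \<and> tau k - tau (k-1) = d \<and> ?S (k-1) (S (m-d) (n - enat d) a b))
          = (0 < k \<and> tau k - tau (k-1) = d \<and> sinceP tau (m-d) (n - enat d) ?A ?B (k-1))"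
          using "1.IH"[OF nz, of d "k-1"] k1 by blast
      qed
      have Y: "?S (k-1) (Since full_interval a b) = sinceP tau 0 \<infinity> ?A ?B (k-1)"
        by (simp add: full_interval_def sinceP_def)
      show ?thesis by (simp only: X Y)
    qed
    also have "\<dots> = sinceP tau m n ?A ?B k"
      by (rule since_unfold[OF st "1.prems" nz, symmetric])
    finally show ?thesis .
  qed
qed

lemma Tr_sem:
  assumes st: "strict_tau tau lam"
  shows "enat k < lam \<Longrightarrow> sat H T tau lam k (Tr m n a b) =
     (\<not> sinceP tau m n (\<lambda>i. \<not> sat H T tau lam i a) (\<lambda>i. \<not> sat H T tau lam i b) k)"
proof (induction m n a b arbitrary: k rule: Tr.induct)
  case (1 m n a b k)
  let ?S = "sat H T tau lam"
  let ?A = "\<lambda>i. \<not> ?S i a"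
  let ?B = "\<lambda>i. \<not> ?S i b"
  show ?case
  proof (cases "n = \<infinity> \<and> m = 0")
    case True thus ?thesis by (subst Tr.simps) (auto simp: full_interval_def sinceP_def)
  next
    case nz: False
    have "?S k (Tr m n a b) = ((in_interval 0 (m,n) \<longrightarrow> ?S k b) \<and> (?S k a \<or>
       ((\<forall>d\<in>set [1..<bnd m n]. 0 < k \<and> tau k - tau (k-1) = d \<longrightarrow> ?S (k-1) (Tr (m-d) (n - enat d) a b))
        \<and> (n = \<infinity> \<and> 0 < k \<and> in_interval (tau k - tau (k-1)) (m,\<infinity>) \<longrightarrow> ?S (k-1) (Trigger full_interval a b)))))"
    proof -
      have e: "Tr m n a b = Conj (if in_interval 0 (m, n) then b else Top)
       (Disj a (Conjs (map (\<lambda>d. PHat (d, enat (Suc d)) (Tr (m - d) (n - enat d) a b)) [1..<bnd m n]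
          @ (if n = \<infinity> then [PHat (m, \<infinity>) (Trigger full_interval a b)] else []))))"
        using nz by (subst Tr.simps) simp
      show ?thesis unfolding e
        by (simp only: sat.simps sat_Conjs set_append ball_map ball_if1 ball_Un sat_PHat in_unit) auto
    qed
    also have "\<dots> = ((in_interval 0 (m,n) \<longrightarrow> \<not> ?B k) \<and> (\<not> ?A k \<or>
       ((\<forall>d\<in>set [1..<bnd m n]. 0 < k \<and> tau k - tau (k-1) = d \<longrightarrow> \<not> sinceP tau (m-d) (n - enat d) ?A ?B (k-1))
        \<and> (n = \<infinity> \<and> 0 < k \<and> in_interval (tau k - tau (k-1)) (m,\<infinity>) \<longrightarrow> \<not> sinceP tau 0 \<infinity> ?A ?B (k-1)))))"
    proof -
      have k1: "enat (k-1) < lam" using enat_lt[of "k-1" k lam] "1.prems" by simp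
      have X: "(\<forall>d\<in>set [1..<bnd m n]. 0 < k \<and> tau k - tau (k-1) = d \<longrightarrow> ?S (k-1) (Tr (m-d) (n - enat d) a b))
          = (\<forall>d\<in>set [1..<bnd m n]. 0 < k \<and> tau k - tau (k-1) = d \<longrightarrow> \<not> sinceP tau (m-d) (n - enat d) ?A ?B (k-1))"
      proof (rule ball_cong[OF refl])
        fix d assume "d \<in> set [1..<bnd m n]"
        then show "(0 < k \<and> tau k - tau (k-1) = d \<longrightarrow> ?S (k-1) (Tr (m-d) (n - enat d) a b))
          = (0 < k \<and> tau k - tau (k-1) = d \<longrightarrow> \<not> sinceP tau (m-d) (n - enat d) ?A ?B (k-1))"
          using "1.IH"[OF nz, of d "k-1"] k1 by blast
      qed
      have Y: "?S (k-1) (Trigger full_interval a b) = (\<not> sinceP tau 0 \<infinity> ?A ?B (k-1))"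
        by (auto simp: full_interval_def sinceP_def)
      show ?thesis by (simp only: X Y not_not)
    qed
    also have "\<dots> = (\<not> sinceP tau m n ?A ?B k)"
      unfolding since_unfold[OF st "1.prems" nz] by blast
    finally show ?thesis .
  qed
qed




lemma enat_lt2: "i < j \<Longrightarrow> enat j < lam \<Longrightarrow> enat i < lam"
  using enat_lt less_imp_le by blast

lemma untilP_cong:
  assumes "\<And>i. enat i < lam \<Longrightarrow> A i = A' i" "\<And>i. enat i < lam \<Longrightarrow> B i = B' i"
  shows "untilP tau lam m n A B k = untilP tau lam m n A' B' k"
proof -
  have "(k \<le> j \<and> enat j < lam \<and> in_interval (tau j - tau k) (m, n) \<and> B j \<and> (\<forall>i. k \<le> i \<and> i < j \<longrightarrow> A i))
     = (k \<le> j \<and> enat j < lam \<and> in_interval (tau j - tau k) (m, n) \<and> B' j \<and> (\<forall>i. k \<le> i \<and> i < j \<longrightarrow> A' i))" for j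
    using assms enat_lt2[of _ j lam] by blast
  then show ?thesis unfolding untilP_def by simp
qed

lemma sinceP_cong:
  assumes "enat k < lam" "\<And>i. enat i < lam \<Longrightarrow> A i = A' i" "\<And>i. enat i < lam \<Longrightarrow> B i = B' i"
  shows "sinceP tau m n A B k = sinceP tau m n A' B' k"
proof -
  have "(j \<le> k \<and> in_interval (tau k - tau j) (m, n) \<and> B j \<and> (\<forall>i. j < i \<and> i \<le> k \<longrightarrow> A i))
     = (j \<le> k \<and> in_interval (tau k - tau j) (m, n) \<and> B' j \<and> (\<forall>i. j < i \<and> i \<le> k \<longrightarrow> A' i))" for j
    using assms enat_lt[of _ k lam] by blast
  then show ?thesis unfolding sinceP_def by simp
qed

fun tr :: "'a mform \<Rightarrow> 'a mform" where
  "tr (Atom p) = Atom p"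
| "tr Bot = Bot"
| "tr (Impl f g) = Impl (tr f) (tr g)"
| "tr (Conj f g) = Conj (tr f) (tr g)"
| "tr (Disj f g) = Disj (tr f) (tr g)"
| "tr (Prev I f) = Prev I (tr f)"
| "tr (Next I f) = Next I (tr f)"
| "tr (Since I f g) = S (fst I) (snd I) (tr f) (tr g)"
| "tr (Trigger I f g) = Tr (fst I) (snd I) (tr f) (tr g)"
| "tr (Until I f g) = U (fst I) (snd I) (tr f) (tr g)"
| "tr (Release I f g) = R (fst I) (snd I) (tr f) (tr g)"

lemma unf_tr: "unary_nf (tr f)"
  by (induction f) (auto intro: unf_U unf_R unf_S unf_Tr)

lemma tr_sem:
  assumes st: "strict_tau tau lam"
  shows "enat k < lam \<Longrightarrow> sat H T tau lam k (tr f) = sat H T tau lam k f"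
proof (induction f arbitrary: H k)
  case (Atom p) then show ?case by simp
next
  case Bot then show ?case by simp
next
  case (Impl f g) then show ?case by simp
next
  case (Conj f g) then show ?case by simp
next
  case (Disj f g) then show ?case by simp
next
  case (Prev I f) then show ?case using Prev.IH[of "k-1" H] enat_lt[of "k-1" k lam] by auto
next
  case (Next I f) then show ?case using Next.IH[of "k+1" H] by auto
next
  case (Until I f g)
  obtain m n where I: "I = (m, n)" by (cases I)
  have "sat H T tau lam k (tr (Until I f g)) = untilP tau lam m n (\<lambda>i. sat H T tau lam i (tr f)) (\<lambda>i. sat H T tau lam i (tr g)) k"
    using U_sem[OF st Until.prems] I by simp
  also have "\<dots> = untilP tau lam m n (\<lambda>i. sat H T tau lam i f) (\<lambda>i. sat H T tau lam i g) k"
    by (rule untilP_cong) (simp_all add: Until.IH)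
  also have "\<dots> = sat H T tau lam k (Until I f g)" unfolding I by (rule sat_Until[symmetric])
  finally show ?case .
next
  case (Release I f g)
  obtain m n where I: "I = (m, n)" by (cases I)
  have "sat H T tau lam k (tr (Release I f g)) = (\<not> untilP tau lam m n (\<lambda>i. \<not> sat H T tau lam i (tr f)) (\<lambda>i. \<not> sat H T tau lam i (tr g)) k)"
    using R_sem[OF st Release.prems] I by simp
  also have "\<dots> = (\<not> untilP tau lam m n (\<lambda>i. \<not> sat H T tau lam i f) (\<lambda>i. \<not> sat H T tau lam i g) k)"
    by (subst untilP_cong) (simp_all add: Release.IH)
  also have "\<dots> = sat H T tau lam k (Release I f g)" unfolding I by (rule sat_Release[symmetric])
  finally show ?case .
next
  case (Since I f g)
  obtain m n where I: "I = (m, n)" by (cases I)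
  have "sat H T tau lam k (tr (Since I f g)) = sinceP tau m n (\<lambda>i. sat H T tau lam i (tr f)) (\<lambda>i. sat H T tau lam i (tr g)) k"
    using S_sem[OF st Since.prems] I by simp
  also have "\<dots> = sinceP tau m n (\<lambda>i. sat H T tau lam i f) (\<lambda>i. sat H T tau lam i g) k"
    by (rule sinceP_cong[OF Since.prems]) (simp_all add: Since.IH)
  also have "\<dots> = sat H T tau lam k (Since I f g)" unfolding I by (rule sat_Since[symmetric])
  finally show ?case .
next
  case (Trigger I f g)
  obtain m n where I: "I = (m, n)" by (cases I)
  have "sat H T tau lam k (tr (Trigger I f g)) = (\<not> sinceP tau m n (\<lambda>i. \<not> sat H T tau lam i (tr f)) (\<lambda>i. \<not> sat H T tau lam i (tr g)) k)"
    using Tr_sem[OF st Trigger.prems] I by simp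
  also have "\<dots> = (\<not> sinceP tau m n (\<lambda>i. \<not> sat H T tau lam i f) (\<lambda>i. \<not> sat H T tau lam i g) k)"
    by (subst sinceP_cong[OF Trigger.prems]) (simp_all add: Trigger.IH)
  also have "\<dots> = sat H T tau lam k (Trigger I f g)" unfolding I by (rule sat_Trigger[symmetric])
  finally show ?case .
qed

theorem corollary4:
  fixes \<phi> :: "'a mform"
  shows "\<exists>\<psi>. unary_nf \<psi> \<and> mht_equiv \<phi> \<psi>"
proof (intro exI conjI)
  show "unary_nf (tr \<phi>)" by (rule unf_tr)
  show "mht_equiv \<phi> (tr \<phi>)"
    unfolding mht_equiv_def
  proof (intro allI impI)
    fix H T :: "nat \<Rightarrow> 'a set" and tau lam k
    assume a: "strict_timed_ht_trace H T tau lam \<and> enat k < lam"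
    then have st: "strict_tau tau lam" unfolding strict_timed_ht_trace_def strict_tau_def by simp
    have e1: "sat H T tau lam k (tr \<phi>) = sat H T tau lam k \<phi>" using tr_sem[OF st] a by blast
    have e2: "sat T T tau lam k (tr \<phi>) = sat T T tau lam k \<phi>" using tr_sem[OF st] a by blast
    show "sat H T tau lam k (Iff \<phi> (tr \<phi>))" unfolding Iff_def using e1 e2 by simp
  qed
qed


end
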